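(* For all $A,B\in{\sf Frm}$: if $\vdash_{\sf WF_{N_2}}A\vee B$, then $\vdash_{\sf WF_{N_2}}A$ or $\vdash_{\sf WF_{N_2}}B$.
   Context: Language: countably many atoms $p,q,\dots$, the constant $\bot$, and binary connectives $\wedge,\vee,\rightarrow$ ($\rightarrow$ is strict implication). ${\sf Frm}$ is the set of formulas built from atoms and $\bot$ with $\wedge,\vee,\rightarrow$; $A,B,C,D$ range over ${\sf Frm}$. The Hilbert system ${\sf WF_{N_2}}$ over ${\sf Frm}$ has axiom schemes $A\rightarrow(A\vee B)$; $B\rightarrow(A\vee B)$; $(A\wedge B)\rightarrow A$; $(A\wedge B)\rightarrow B$; $A\wedge(B\vee C)\rightarrow(A\wedge B)\vee(A\wedge C)$; $A\rightarrow A$; $\bot\rightarrow A$; and rules (from theorems to a theorem): from $A$ and $A\rightarrow B$ infer $B$; from $A$ infer $B\rightarrow A$; from $A\rightarrow B$ and $B\rightarrow C$ infer $A\rightarrow C$; from $A\rightarrow B$ and $A\rightarrow C$ infer $A\rightarrow(B\wedge C)$; from $A\rightarrow C$ and $B\rightarrow C$ infer $(A\vee B)\rightarrow C$; from $A$ and $B$ infer $A\wedge B$; (${\sf N_2}$) from $C\rightarrow A\vee D$ and $C\wedge B\rightarrow D$ infer $(A\rightarrow B)\rightarrow(C\rightarrow D)$. $\vdash_{\sf WF_{N_2}}A$ means $A$ is a theorem of this system. *)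

theory Defs
  imports Main
begin

datatype frm =
    Atom nat
  | Bot
  | Conj frm frm
  | Disj frm frm
  | Imp frm frm

inductive thm_WFN2 :: "frm \<Rightarrow> bool" where
  ax_disjI1: "thm_WFN2 (Imp A (Disj A B))"
| ax_disjI2: "thm_WFN2 (Imp B (Disj A B))"
| ax_conjE1: "thm_WFN2 (Imp (Conj A B) A)"
| ax_conjE2: "thm_WFN2 (Imp (Conj A B) B)"
| ax_distr: "thm_WFN2 (Imp (Conj A (Disj B C)) (Disj (Conj A B) (Conj A C)))"
| ax_refl: "thm_WFN2 (Imp A A)"
| ax_bot: "thm_WFN2 (Imp Bot A)"
| r_mp: "thm_WFN2 A \<Longrightarrow> thm_WFN2 (Imp A B) \<Longrightarrow> thm_WFN2 B"
| r_weak: "thm_WFN2 A \<Longrightarrow> thm_WFN2 (Imp B A)"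
| r_trans: "thm_WFN2 (Imp A B) \<Longrightarrow> thm_WFN2 (Imp B C) \<Longrightarrow> thm_WFN2 (Imp A C)"
| r_conjI: "thm_WFN2 (Imp A B) \<Longrightarrow> thm_WFN2 (Imp A C) \<Longrightarrow> thm_WFN2 (Imp A (Conj B C))"
| r_disjE: "thm_WFN2 (Imp A C) \<Longrightarrow> thm_WFN2 (Imp B C) \<Longrightarrow> thm_WFN2 (Imp (Disj A B) C)"
| r_adj: "thm_WFN2 A \<Longrightarrow> thm_WFN2 B \<Longrightarrow> thm_WFN2 (Conj A B)"
| r_N2: "thm_WFN2 (Imp C (Disj A D)) \<Longrightarrow> thm_WFN2 (Imp (Conj C B) D)
         \<Longrightarrow> thm_WFN2 (Imp (Imp A B) (Imp C D))"

end

theory Submission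
  imports Defs
begin

fun S :: "frm \<Rightarrow> bool" where
  "S (Atom n) = thm_WFN2 (Atom n)"
| "S Bot = False"
| "S (Conj a b) = (thm_WFN2 (Conj a b) \<and> S a \<and> S b)"
| "S (Disj a b) = (thm_WFN2 (Disj a b) \<and> (S a \<or> S b))"
| "S (Imp a b) = (thm_WFN2 (Imp a b) \<and> (S a \<longrightarrow> S b))"

lemma S_thm: "S F \<Longrightarrow> thm_WFN2 F"
  by (cases F) auto

lemma sound: "thm_WFN2 F \<Longrightarrow> S F"
proof (induction rule: thm_WFN2.induct)
  case (ax_disjI1 A B) then show ?case
    by (auto intro: thm_WFN2.intros dest: S_thm)
next
  case (ax_disjI2 B A) then show ?case
    by (auto intro: thm_WFN2.intros dest: S_thm)
next
  case (ax_conjE1 A B) then show ?case by (auto intro: thm_WFN2.intros)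
next
  case (ax_conjE2 A B) then show ?case by (auto intro: thm_WFN2.intros)
next
  case (ax_distr A B C)
  have ax: "thm_WFN2 (Imp (Conj A (Disj B C)) (Disj (Conj A B) (Conj A C)))"
    by (rule thm_WFN2.ax_distr)
  show ?case using ax
    by (auto intro: thm_WFN2.intros r_mp[OF _ ax] dest: S_thm)
next
  case (ax_refl A) then show ?case by (auto intro: thm_WFN2.intros)
next
  case (ax_bot A) then show ?case by (auto intro: thm_WFN2.intros)
next
  case (r_mp A B) then show ?case by auto
next
  case (r_weak A B) then show ?case by (auto intro: thm_WFN2.intros)
next
  case (r_trans A B C) then show ?case by (auto intro: thm_WFN2.intros)
next
  case (r_conjI A B C) then show ?case by (auto intro: thm_WFN2.intros dest: S_thm)
next
  case (r_disjE A C B) then show ?case by (auto intro: thm_WFN2.intros)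
next
  case (r_adj A B) then show ?case by (auto intro: thm_WFN2.intros)
next
  case (r_N2 C A D B)
  have t: "thm_WFN2 (Imp (Imp A B) (Imp C D))"
    using r_N2.hyps by (rule thm_WFN2.r_N2)
  show ?case
  proof -
    { assume sab: "S (Imp A B)"
      have "thm_WFN2 (Imp C D)" using S_thm[OF sab] t by (rule thm_WFN2.r_mp)
      moreover have "S C \<longrightarrow> S D"
      proof
        assume sc: "S C"
        then have "S A \<or> S D" using r_N2.IH(1) by auto
        then show "S D"
        proof
          assume "S A" then have "S B" using sab by auto
          then have "S (Conj C B)" using sc by (auto intro: thm_WFN2.r_adj dest: S_thm)
          then show "S D" using r_N2.IH(2) by auto
        qed
      qed
      ultimately have "S (Imp C D)" by simp }
    then show ?thesis using t by simp
  qed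
qed

theorem corollary5p8:
  fixes A B :: frm
  assumes "thm_WFN2 (Disj A B)"
  shows "thm_WFN2 A \<or> thm_WFN2 B"
  using sound[OF assms] by (auto dest: S_thm)

end
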